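(* Let $a,c>0$ and $b,d<0$ be real numbers with $x_A=x_B$, and let $W_0(z)=1$, $W_1(z)=z$, $W_n(z)=(az+b)W_{n-1}(z)+(cz+d)W_{n-2}(z)$ for $n\ge2$. Then $u\le x_\Delta^-$, $u<0$, $(-1)^nW_n(u)>0$ for every $n\ge0$, and if $u\neq x_\Delta^-$ then $u$ is an isolated limit of zeros of $\{W_n(z)\}$.
   Context: Notation: $A(z)=az+b$, $B(z)=cz+d$, $x_A=-b/a$, $x_B=-d/c$, $\Delta(z)=A(z)^2+4B(z)$, $\Delta_\Delta=c^2-a^2B(x_A)$, $x_\Delta^\pm=x_A+\frac{-2c\pm2\sqrt{\Delta_\Delta}}{a^2}$ (here $x_\Delta^+=x_A=x_B$), $g(z)=(1-a)z^2-(b+c)z-d$, $\Delta_g=(b+c)^2+4d(1-a)$, $F=\Delta_g-\Delta_\Delta=d(a-2)^2+bc(2-a)+b^2$. The zeros of $g$ are $x_g^\pm=\frac{b+c}{2(1-a)}\pm\frac{\sqrt{\Delta_g}}{2|1-a|}$ if $a\neq1$, and $x_g^\pm=-d/(b+c)$ if $a=1$ and $b+c\ne0$. Define $u=x_\Delta^-$ if $a<2$ and $F\le0$; $u=x_g^+$ if $a<1$ and $F>0$; $u=x_g^-$ otherwise. For $z=re^{i\theta}$, $\theta\in(-\pi,\pi]$, $\sqrt z:=\sqrt r e^{i\theta/2}$, and $\lambda_\pm(z)=\frac{A(z)\pm\sqrt{\Delta(z)}}{2}$. A number $z^*$ is a limit of zeros if there exist zeros $z_n$ of $W_n$ with $z_n\to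 z^*$; it is isolated if $|\lambda_+(z^* )|\ne|\lambda_-(z^* )|$. *)

theory Defs
  imports "HOL-Analysis.Analysis"
begin

fun W :: "real \<Rightarrow> real \<Rightarrow> real \<Rightarrow> real \<Rightarrow> nat \<Rightarrow> 'a::real_algebra_1 \<Rightarrow> 'a" where
  "W a b c d 0 z = 1"
| "W a b c d (Suc 0) z = z"
| "W a b c d (Suc (Suc n)) z =
     (of_real a * z + of_real b) * W a b c d (Suc n) z + (of_real c * z + of_real d) * W a b c d n z"

definition xA :: "real \<Rightarrow> real \<Rightarrow> real" where "xA a b = - b / a"
definition xB :: "real \<Rightarrow> real \<Rightarrow> real" where "xB c d = - d / c"

definition DeltaDelta :: "real \<Rightarrow> real \<Rightarrow> real \<Rightarrow> real \<Rightarrow> real" where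
  "DeltaDelta a b c d = c^2 - a^2 * (c * xA a b + d)"

definition xDelta_minus :: "real \<Rightarrow> real \<Rightarrow> real \<Rightarrow> real \<Rightarrow> real" where
  "xDelta_minus a b c d = xA a b + (- 2 * c - 2 * sqrt (DeltaDelta a b c d)) / a^2"

definition Delta_g :: "real \<Rightarrow> real \<Rightarrow> real \<Rightarrow> real \<Rightarrow> real" where
  "Delta_g a b c d = (b + c)^2 + 4 * d * (1 - a)"

definition FF :: "real \<Rightarrow> real \<Rightarrow> real \<Rightarrow> real \<Rightarrow> real" where
  "FF a b c d = d * (a - 2)^2 + b * c * (2 - a) + b^2"

definition xg_plus :: "real \<Rightarrow> real \<Rightarrow> real \<Rightarrow> real \<Rightarrow> real" where
  "xg_plus a b c d =
     (if a \<noteq> 1 then (b + c) / (2 * (1 - a)) + sqrt (Delta_g a b c d) / (2 * \<bar>1 - a\<bar>)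
      else - d / (b + c))"

definition xg_minus :: "real \<Rightarrow> real \<Rightarrow> real \<Rightarrow> real \<Rightarrow> real" where
  "xg_minus a b c d =
     (if a \<noteq> 1 then (b + c) / (2 * (1 - a)) - sqrt (Delta_g a b c d) / (2 * \<bar>1 - a\<bar>)
      else - d / (b + c))"

definition upt_u :: "real \<Rightarrow> real \<Rightarrow> real \<Rightarrow> real \<Rightarrow> real" where
  "upt_u a b c d =
     (if a < 2 \<and> FF a b c d \<le> 0 then xDelta_minus a b c d
      else if a < 1 \<and> FF a b c d > 0 then xg_plus a b c d
      else xg_minus a b c d)"

text \<open>Principal square root: for z = r e^{i\<theta>}, \<theta> in (-pi,pi], sqrt z = sqrt r e^{i\<theta>/2}.\<close>
definition psqrt :: "complex \<Rightarrow> complex" where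
  "psqrt z = complex_of_real (sqrt (cmod z)) * exp (\<i> * complex_of_real (Arg z / 2))"

definition DeltaC :: "real \<Rightarrow> real \<Rightarrow> real \<Rightarrow> real \<Rightarrow> complex \<Rightarrow> complex" where
  "DeltaC a b c d z = (of_real a * z + of_real b)^2 + 4 * (of_real c * z + of_real d)"

definition lam_plus :: "real \<Rightarrow> real \<Rightarrow> real \<Rightarrow> real \<Rightarrow> complex \<Rightarrow> complex" where
  "lam_plus a b c d z = ((of_real a * z + of_real b) + psqrt (DeltaC a b c d z)) / 2"

definition lam_minus :: "real \<Rightarrow> real \<Rightarrow> real \<Rightarrow> real \<Rightarrow> complex \<Rightarrow> complex" where
  "lam_minus a b c d z = ((of_real a * z + of_real b) - psqrt (DeltaC a b c d z)) / 2"

text \<open>z* is a limit of zeros: there are zeros z_n of W_n (for all sufficiently large n,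
  since W_0 = 1 has no zeros) with z_n \<rightarrow> z*.\<close>
definition limit_of_zeros :: "real \<Rightarrow> real \<Rightarrow> real \<Rightarrow> real \<Rightarrow> complex \<Rightarrow> bool" where
  "limit_of_zeros a b c d zs \<longleftrightarrow>
     (\<exists>zn :: nat \<Rightarrow> complex. (\<forall>\<^sub>F n in sequentially. W a b c d n (zn n) = 0) \<and> zn \<longlonglongrightarrow> zs)"

definition isolated_pt :: "real \<Rightarrow> real \<Rightarrow> real \<Rightarrow> real \<Rightarrow> complex \<Rightarrow> bool" where
  "isolated_pt a b c d zs \<longleftrightarrow> cmod (lam_plus a b c d zs) \<noteq> cmod (lam_minus a b c d zs)"

end

theory Submission
  imports Defs
begin


lemma W_real_SS: "W a b c d (Suc (Suc n)) (z::real) = (a*z+b) * W a b c d (Suc n) z + (c*z+d) * W a b c d n z"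
  by simp

lemma W_of_real: "W a b c d n (of_real x :: 'a::real_algebra_1) = of_real (W a b c d n x)"
  by (induction a b c d n x rule: W.induct) auto

lemma W_cont: "continuous_on S (W a b c d n :: real \<Rightarrow> real)"
proof -
  have "continuous_on S (W a b c d n :: real \<Rightarrow> real) \<and> continuous_on S (W a b c d (Suc n) :: real \<Rightarrow> real)"
  proof (induction n)
    case 0 then show ?case by (simp add: continuous_on_id continuous_on_const)
  next
    case (Suc n)
    then show ?case
      by (simp only: W_real_SS) (auto intro!: continuous_intros)
  qed
  then show ?thesis by blast
qed

lemma W_closed:
  fixes z L M :: real
  assumes "L + M = a*z+b" "L*M = -(c*z+d)"
  shows "W a b c d n z * (L - M) = (z - M) * L^n - (z - L) * M^n"
proof -
  have "W a b c d n z * (L - M) = (z - M) * L^n - (z - L) * M^n \<and>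
        W a b c d (Suc n) z * (L - M) = (z - M) * L^(Suc n) - (z - L) * M^(Suc n)"
  proof (induction n)
    case 0 then show ?case by (simp add: algebra_simps)
  next
    case (Suc n)
    have L2: "L^2 = (a*z+b)*L + (c*z+d)" proof -
      have "L^2 = L*(L+M) - L*M" by (simp add: power2_eq_square algebra_simps)
      then show ?thesis using assms by (simp add: algebra_simps)
    qed
    have M2: "M^2 = (a*z+b)*M + (c*z+d)" proof -
      have "M^2 = M*(L+M) - L*M" by (simp add: power2_eq_square algebra_simps)
      then show ?thesis using assms by (simp add: algebra_simps)
    qed
    obtain h1 h2 where h1: "W a b c d n z * (L - M) = (z - M) * L^n - (z - L) * M^n"
      and h2: "W a b c d (Suc n) z * (L - M) = (z - M) * L^(Suc n) - (z - L) * M^(Suc n)" using Suc.IH by blast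
    have "W a b c d (Suc (Suc n)) z * (L - M) = (a*z+b) * (W a b c d (Suc n) z * (L - M)) + (c*z+d) * (W a b c d n z * (L-M))"
      by (simp only: W_real_SS) (simp add: algebra_simps)
    also have "\<dots> = (a*z+b)*((z - M) * L^(Suc n) - (z - L) * M^(Suc n)) + (c*z+d)*((z - M) * L^n - (z - L) * M^n)"
      by (simp only: h1 h2)
    also have "\<dots> = (z - M) * L^n * ((a*z+b)*L + (c*z+d)) - (z - L) * M^n * ((a*z+b)*M + (c*z+d))"
      by (simp add: algebra_simps)
    also have "\<dots> = (z - M) * L^(Suc (Suc n)) - (z - L) * M^(Suc (Suc n))"
      by (simp only: L2[symmetric] M2[symmetric]) (simp add: power2_eq_square algebra_simps)
    finally show ?case using h2 by simp
  qed
  then show ?thesis by blast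
qed



lemma W_sign_eventually:
  fixes z :: real
  assumes D: "(a*z+b)^2 + 4*(c*z+d) > 0" and A: "a*z+b < 0"
  shows "eventually (\<lambda>n. ((-1)^n * W a b c d n z) * ((a*z+b + sqrt((a*z+b)^2 + 4*(c*z+d)))/2 - z) > 0) sequentially
         \<or> (a*z+b + sqrt((a*z+b)^2 + 4*(c*z+d)))/2 - z = 0"
proof -
  define s where "s = sqrt((a*z+b)^2 + 4*(c*z+d))"
  define L where "L = (a*z+b + s)/2"
  define M where "M = (a*z+b - s)/2"
  have s0: "s > 0" using D by (simp add: s_def)
  have s2: "s^2 = (a*z+b)^2 + 4*(c*z+d)" using D by (simp add: s_def)
  have LM1: "L + M = a*z+b" by (simp add: L_def M_def field_simps)
  have LM2: "L * M = -(c*z+d)"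
  proof -
    have "L*M = ((a*z+b)^2 - s^2)/4" by (simp add: L_def M_def power2_eq_square field_simps)
    then show ?thesis using s2 by simp
  qed
  have Mneg: "M < 0" using A s0 by (simp add: M_def)
  define m where "m = - M"
  have m0: "m > 0" using Mneg by (simp add: m_def)
  have Lm: "\<bar>L\<bar> < m" using A s0 unfolding L_def m_def M_def abs_less_iff by (intro conjI) (simp_all add: field_simps)
  define q where "q = - L / m"
  have q1: "norm q < 1" using Lm m0 by (simp add: q_def abs_divide)
  define E where "E n = (z - M) * q^n + (L - z)" for n
  have EL: "E \<longlonglongrightarrow> L - z"
  proof -
    have "(\<lambda>n. (z - M) * q^n + (L - z)) \<longlonglongrightarrow> (z - M) * 0 + (L - z)"
      by (intro tendsto_intros q1)
    then show ?thesis by (simp add: E_def[abs_def])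
  qed
  have key: "(-1)^n * W a b c d n z * s = m^n * E n" for n
  proof -
    have "W a b c d n z * (L - M) = (z - M) * L^n - (z - L) * M^n" by (rule W_closed[OF LM1 LM2])
    moreover have "L - M = s" by (simp add: L_def M_def field_simps)
    ultimately have e1: "W a b c d n z * s = (z - M) * L^n - (z - L) * M^n" by simp
    have "(-1)^n * W a b c d n z * s = (-1)^n * (W a b c d n z * s)" by (simp only: mult.assoc)
    also have "\<dots> = (-1)^n * ((z - M) * L^n - (z - L) * M^n)" by (simp only: e1)
    also have "\<dots> = (z - M) * ((-1)^n * L^n) - (z - L) * ((-1)^n*M^n)" by (simp only: right_diff_distrib mult_ac)
    also have "(-1)^n * L^n = (q*m)^n" using m0 by (simp add: q_def power_mult_distrib[symmetric])
    also have "(-1)^n * M^n = m^n" by (simp add: m_def power_mult_distrib[symmetric])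
    finally show ?thesis by (simp add: E_def power_mult_distrib algebra_simps)
  qed
  show ?thesis
  proof (cases "L - z = 0")
    case True then show ?thesis by (simp add: L_def s_def)
  next
    case False
    have ev: "eventually (\<lambda>n. E n * (L - z) > 0) sequentially"
    proof -
      have "(\<lambda>n. E n * (L - z)) \<longlonglongrightarrow> (L - z) * (L - z)" by (intro tendsto_intros EL)
      moreover have "(L - z) * (L - z) > 0" using False by (simp add: zero_less_mult_iff) linarith
      ultimately show ?thesis by (rule order_tendstoD)
    qed
    have "eventually (\<lambda>n. ((-1)^n * W a b c d n z) * (L - z) > 0) sequentially"
    proof (rule eventually_mono[OF ev])
      fix n assume h: "E n * (L - z) > 0"
      have "((-1)^n * W a b c d n z) * (L - z) * s = m^n * (E n * (L - z))"
        using key[of n] by (simp add: algebra_simps)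
      also have "\<dots> > 0" using h m0 by simp
      finally show "((-1)^n * W a b c d n z) * (L - z) > 0" using s0
        by (simp add: zero_less_mult_iff)
    qed
    then show ?thesis by (simp add: L_def s_def)
  qed
qed



lemma psqrt_pos: "r > 0 \<Longrightarrow> psqrt (complex_of_real r) = complex_of_real (sqrt r)"
  by (simp add: psqrt_def)

lemma isolated_part:
  fixes a b c d u :: real
  assumes A: "a*u+b < 0" and Du: "(a*u+b)^2 + 4*(c*u+d) > 0"
  shows "isolated_pt a b c d (complex_of_real u)"
proof -
  define r where "r = (a*u+b)^2 + 4*(c*u+d)"
  have r0: "r > 0" using Du by (simp add: r_def)
  have DC: "DeltaC a b c d (complex_of_real u) = complex_of_real r" by (simp add: DeltaC_def r_def)
  have lp: "lam_plus a b c d (complex_of_real u) = complex_of_real ((a*u+b + sqrt r)/2)"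
    by (simp add: lam_plus_def DC psqrt_pos[OF r0])
  have lm: "lam_minus a b c d (complex_of_real u) = complex_of_real ((a*u+b - sqrt r)/2)"
    by (simp add: lam_minus_def DC psqrt_pos[OF r0])
  have s0: "sqrt r > 0" using r0 by simp
  have "\<bar>(a*u+b + sqrt r)/2\<bar> \<noteq> \<bar>(a*u+b - sqrt r)/2\<bar>"
    using A s0 by (auto simp: abs_if field_simps split: if_splits)
  then show ?thesis by (simp add: isolated_pt_def lp lm norm_of_real del: of_real_add of_real_diff of_real_divide)
qed

lemma zeros_seq:
  fixes u :: real
  assumes H: "\<And>e. e > 0 \<Longrightarrow> eventually (\<lambda>n. \<exists>x. \<bar>x - u\<bar> \<le> e \<and> W a b c d n x = 0) sequentially"
  shows "limit_of_zeros a b c d (complex_of_real u)"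
proof -
  define Z where "Z n = (\<lambda>x. \<bar>x - u\<bar>) ` {x. W a b c d n x = (0::real)}" for n
  define f where "f n = Inf (Z n)" for n
  define xs where "xs n = (SOME x. W a b c d n x = (0::real) \<and> \<bar>x - u\<bar> < f n + 1 / real (Suc n))" for n
  define zn where "zn n = complex_of_real (xs n)" for n
  have bdd: "bdd_below (Z n)" for n unfolding Z_def by (rule bdd_belowI[of _ 0]) auto
  have xs_ok: "W a b c d n (xs n) = 0 \<and> \<bar>xs n - u\<bar> < f n + 1 / real (Suc n)" if ne: "\<exists>x. W a b c d n x = (0::real)" for n
  proof -
    have "Z n \<noteq> {}" using ne by (auto simp: Z_def)
    moreover have "Inf (Z n) < f n + 1 / real (Suc n)" by (simp add: f_def)
    ultimately obtain y where "y \<in> Z n" "y < f n + 1 / real (Suc n)" using cInf_lessD by blast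
    then have "\<exists>x. W a b c d n x = (0::real) \<and> \<bar>x - u\<bar> < f n + 1 / real (Suc n)" by (auto simp: Z_def)
    then show ?thesis unfolding xs_def by (rule someI_ex)
  qed
  have ev0: "eventually (\<lambda>n. W a b c d n (zn n) = 0) sequentially"
    using H[OF zero_less_one]
  proof (rule eventually_mono)
    fix n assume "\<exists>x. \<bar>x - u\<bar> \<le> 1 \<and> W a b c d n x = (0::real)"
    then have "W a b c d n (xs n) = 0" using xs_ok by blast
    then show "W a b c d n (zn n) = 0" by (simp add: zn_def W_of_real)
  qed
  have "zn \<longlonglongrightarrow> complex_of_real u"
  proof (rule tendstoI)
    fix e :: real assume e: "e > 0"
    have e1: "eventually (\<lambda>n. 1 / real (Suc n) < e/3) sequentially"
    proof -
      have "(\<lambda>n. 1 / real (Suc n)) \<longlonglongrightarrow> 0" using LIMSEQ_inverse_real_of_nat by (simp add: inverse_eq_divide)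
      moreover have "(0::real) < e/3" using e by simp
      ultimately show ?thesis by (rule order_tendstoD)
    qed
    have "eventually (\<lambda>n. (\<exists>x. \<bar>x - u\<bar> \<le> e/3 \<and> W a b c d n x = 0) \<and> 1 / real (Suc n) < e/3) sequentially"
      using eventually_conj[OF H[of "e/3"] e1] e by simp
    then show "eventually (\<lambda>n. dist (zn n) (complex_of_real u) < e) sequentially"
    proof (rule eventually_mono)
      fix n assume "(\<exists>x. \<bar>x - u\<bar> \<le> e/3 \<and> W a b c d n x = 0) \<and> 1 / real (Suc n) < e/3"
      then obtain x where x: "\<bar>x - u\<bar> \<le> e/3" "W a b c d n x = 0" and n: "1 / real (Suc n) < e/3" by blast
      have "f n \<le> \<bar>x - u\<bar>" unfolding f_def by (rule cInf_lower) (use x bdd in \<open>auto simp: Z_def\<close>)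
      moreover have "\<bar>xs n - u\<bar> < f n + 1 / real (Suc n)" using xs_ok x by blast
      ultimately have "\<bar>xs n - u\<bar> < e" using x n by linarith
      moreover have "dist (zn n) (complex_of_real u) = \<bar>xs n - u\<bar>"
        by (simp add: zn_def dist_norm of_real_diff[symmetric] norm_of_real del: of_real_diff)
      ultimately show "dist (zn n) (complex_of_real u) < e" by simp
    qed
  qed
  then show ?thesis unfolding limit_of_zeros_def using ev0 by blast
qed



lemma neg_of_prod: "(x::real) * y < 0 \<Longrightarrow> y > 0 \<Longrightarrow> x < 0"
  by (simp add: mult_less_0_iff)

lemma zeros_near:
  fixes a b c d u :: real
  assumes A: "a*u+b < 0" and gu: "(1-a)*u^2 - (b+c)*u - d = 0"
    and Du: "(a*u+b)^2 + 4*(c*u+d) > 0" and pos: "2*u - (a*u+b) > 0"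
    and gp: "2*(1-a)*u - (b+c) \<noteq> 0"
  shows "\<exists>\<delta>0>0. \<forall>\<delta>. 0 < \<delta> \<longrightarrow> \<delta> < \<delta>0 \<longrightarrow>
           eventually (\<lambda>n. \<exists>x. \<bar>x - u\<bar> \<le> \<delta> \<and> W a b c d n x = 0) sequentially"
proof -
  define Df where "Df z = (a*z+b)^2 + 4*(c*z+d)" for z
  define Lp where "Lp z = (a*z+b + sqrt(Df z))/2" for z
  define Lm where "Lm z = (a*z+b - sqrt(Df z))/2" for z
  define g where "g z = (1-a)*z^2 - (b+c)*z - d" for z
  define g' where "g' = 2*(1-a)*u - (b+c)"
  have sq: "sqrt (Df u) = 2*u - (a*u+b)"
  proof -
    have "(2*u - (a*u+b))^2 = Df u" using gu unfolding Df_def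
      by (simp add: power2_eq_square algebra_simps)
    then show ?thesis using pos by (metis abs_of_pos real_sqrt_abs)
  qed
  have Lmu: "Lm u - u < 0" using pos by (simp add: Lm_def sq field_simps)
  have prod: "(Lp z - z) * (Lm z - z) = g z" if "Df z \<ge> 0" for z
  proof -
    have s2: "(sqrt (Df z))^2 = Df z" using that by simp
    have "(Lp z - z) * (Lm z - z) = ((a*z+b - 2*z)^2 - (sqrt (Df z))^2)/4"
      by (simp add: Lp_def Lm_def power2_eq_square field_simps)
    also have "\<dots> = g z" unfolding s2 by (simp add: Df_def g_def power2_eq_square field_simps)
    finally show ?thesis .
  qed
  have cont: "isCont (\<lambda>z. Lm z - z) u" "isCont Df u" "isCont (\<lambda>z. a*z+b) u"
    unfolding Lm_def Df_def by (auto intro!: continuous_intros)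
  have ev1: "eventually (\<lambda>z. Lm z - z < 0) (at u)"
    by (rule order_tendstoD(2)[OF cont(1)[unfolded isCont_def] Lmu])
  have ev2: "eventually (\<lambda>z. Df z > 0) (at u)"
    by (rule order_tendstoD(1)[OF cont(2)[unfolded isCont_def]]) (use Du in \<open>simp add: Df_def\<close>)
  have ev3: "eventually (\<lambda>z. a*z+b < 0) (at u)"
    by (rule order_tendstoD(2)[OF cont(3)[unfolded isCont_def] A])
  obtain \<delta>1 where d1: "\<delta>1 > 0" and d1P: "\<And>z. z \<noteq> u \<Longrightarrow> dist z u < \<delta>1 \<Longrightarrow> Lm z - z < 0 \<and> Df z > 0 \<and> a*z+b < 0"
    using eventually_conj[OF ev1 eventually_conj[OF ev2 ev3]] unfolding eventually_at by blast
  define \<delta>2 where "\<delta>2 = \<bar>g'\<bar> / (\<bar>1-a\<bar> + 1)"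
  have d2: "\<delta>2 > 0" using gp by (simp add: \<delta>2_def g'_def)
  have gexp: "g (u + e) = e * (g' + (1-a)*e)" for e
    using gu by (simp add: g_def g'_def power2_eq_square algebra_simps)
  show ?thesis
  proof (intro exI[of _ "min \<delta>1 \<delta>2"] conjI allI impI)
    show "min \<delta>1 \<delta>2 > 0" using d1 d2 by simp
    fix \<delta> :: real assume dpos: "0 < \<delta>" and dlt: "\<delta> < min \<delta>1 \<delta>2"
    define z1 where "z1 = u - \<delta>"
    define z2 where "z2 = u + \<delta>"
    have P1: "Lm z1 - z1 < 0 \<and> Df z1 > 0 \<and> a*z1+b < 0" using d1P[of z1] dpos dlt by (simp add: z1_def dist_real_def)
    have P2: "Lm z2 - z2 < 0 \<and> Df z2 > 0 \<and> a*z2+b < 0" using d1P[of z2] dpos dlt by (simp add: z2_def dist_real_def)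
    have small: "\<bar>1-a\<bar> * \<delta> < \<bar>g'\<bar>"
    proof -
      have "\<delta> * (\<bar>1-a\<bar> + 1) < \<bar>g'\<bar>" using dlt d2 by (simp add: \<delta>2_def field_simps)
      then show ?thesis using dpos by (simp add: algebra_simps)
    qed
    have gg: "g z1 * g z2 < 0"
    proof -
      have h1: "g z1 = (-\<delta>) * (g' + (1-a)*(-\<delta>))" using gexp[of "-\<delta>"] by (simp add: z1_def)
      have h2: "g z2 = \<delta> * (g' + (1-a)*\<delta>)" using gexp[of "\<delta>"] by (simp add: z2_def add.commute)
      have "g z1 * g z2 = - (\<delta>^2 * (g'^2 - ((1-a)*\<delta>)^2))"
        unfolding h1 h2 by (simp add: power2_eq_square algebra_simps)
      moreover have "((1-a)*\<delta>)^2 < g'^2"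
      proof -
        have "\<bar>(1-a)*\<delta>\<bar> < \<bar>g'\<bar>" using small dpos by (simp add: abs_mult)
        then have "\<bar>(1-a)*\<delta>\<bar>^2 < \<bar>g'\<bar>^2" by (intro power_strict_mono) auto
        then show ?thesis by simp
      qed
      ultimately show ?thesis using dpos by (simp add: mult_pos_pos)
    qed
    have kk: "(Lp z1 - z1) * (Lp z2 - z2) < 0"
    proof -
      have q1: "(Lp z1 - z1) * (Lm z1 - z1) = g z1" using prod[of z1] P1 by simp
      have q2: "(Lp z2 - z2) * (Lm z2 - z2) = g z2" using prod[of z2] P2 by simp
      have "(Lp z1 - z1) * (Lp z2 - z2) * ((Lm z1 - z1) * (Lm z2 - z2)) = ((Lp z1 - z1) * (Lm z1 - z1)) * ((Lp z2 - z2) * (Lm z2 - z2))"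
        by (simp only: mult_ac)
      also have "\<dots> = g z1 * g z2" by (simp only: q1 q2)
      finally have "(Lp z1 - z1) * (Lp z2 - z2) * ((Lm z1 - z1) * (Lm z2 - z2)) = g z1 * g z2" .
      moreover have "(Lm z1 - z1) * (Lm z2 - z2) > 0" using P1 P2 by (simp add: mult_neg_neg)
      ultimately have "((Lp z1 - z1) * (Lp z2 - z2)) * ((Lm z1 - z1) * (Lm z2 - z2)) < 0"
        and "(Lm z1 - z1) * (Lm z2 - z2) > 0" using gg by auto
      then show ?thesis by (rule neg_of_prod)
    qed
    have k1: "Lp z1 - z1 \<noteq> 0" and k2: "Lp z2 - z2 \<noteq> 0" using kk by auto
    have E1: "eventually (\<lambda>n. ((-1)^n * W a b c d n z1) * (Lp z1 - z1) > 0) sequentially"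
      using W_sign_eventually[of a z1 b c d] P1 k1 by (simp add: Lp_def Df_def)
    have E2: "eventually (\<lambda>n. ((-1)^n * W a b c d n z2) * (Lp z2 - z2) > 0) sequentially"
      using W_sign_eventually[of a z2 b c d] P2 k2 by (simp add: Lp_def Df_def)
    show "eventually (\<lambda>n. \<exists>x. \<bar>x - u\<bar> \<le> \<delta> \<and> W a b c d n x = 0) sequentially"
      using eventually_conj[OF E1 E2]
    proof (rule eventually_mono)
      fix n assume h: "0 < (-1) ^ n * W a b c d n z1 * (Lp z1 - z1) \<and> 0 < (-1) ^ n * W a b c d n z2 * (Lp z2 - z2)"
      have "0 < ((-1) ^ n * W a b c d n z1 * (Lp z1 - z1)) * ((-1) ^ n * W a b c d n z2 * (Lp z2 - z2))"
        using h by simp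
      also have "\<dots> = (W a b c d n z1 * W a b c d n z2) * ((Lp z1 - z1) * (Lp z2 - z2))"
        by (simp add: algebra_simps power_mult_distrib[symmetric])
      finally have WW: "W a b c d n z1 * W a b c d n z2 < 0" using kk
        by (metis mult_neg_neg mult_pos_neg not_less_iff_gr_or_eq mult_eq_0_iff order_less_irrefl)
      have z12: "z1 \<le> z2" using dpos by (simp add: z1_def z2_def)
      have cW: "continuous_on {z1..z2} (W a b c d n :: real \<Rightarrow> real)" by (rule W_cont)
      have "\<exists>x. z1 \<le> x \<and> x \<le> z2 \<and> W a b c d n x = 0"
      proof (cases "W a b c d n z1 \<le> 0")
        case True
        then have "0 \<le> W a b c d n z2" using WW by (auto simp: mult_less_0_iff)
        then show ?thesis using IVT'[OF True _ z12 cW] by blast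
      next
        case False
        then have "W a b c d n z2 \<le> 0" using WW by (auto simp: mult_less_0_iff)
        then show ?thesis using IVT2'[OF _ _ z12 cW] False by fastforce
      qed
      then obtain x where "z1 \<le> x" "x \<le> z2" "W a b c d n x = 0" by blast
      then have "\<bar>x - u\<bar> \<le> \<delta> \<and> W a b c d n x = 0" by (auto simp: z1_def z2_def abs_le_iff)
      then show "\<exists>x. \<bar>x - u\<bar> \<le> \<delta> \<and> W a b c d n x = 0" by blast
    qed
  qed
qed



lemma lim_part:
  fixes a b c d u :: real
  assumes A: "a*u+b < 0" and gu: "(1-a)*u^2 - (b+c)*u - d = 0"
    and Du: "(a*u+b)^2 + 4*(c*u+d) > 0" and pos: "2*u - (a*u+b) > 0"
    and gp: "2*(1-a)*u - (b+c) \<noteq> 0"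
  shows "limit_of_zeros a b c d (complex_of_real u) \<and> isolated_pt a b c d (complex_of_real u)"
proof
  show "isolated_pt a b c d (complex_of_real u)" by (rule isolated_part[OF A Du])
  obtain \<delta>0 where d0: "\<delta>0 > 0" and H0: "\<And>\<delta>. 0 < \<delta> \<Longrightarrow> \<delta> < \<delta>0 \<Longrightarrow>
      eventually (\<lambda>n. \<exists>x. \<bar>x - u\<bar> \<le> \<delta> \<and> W a b c d n x = 0) sequentially"
    using zeros_near[OF A gu Du pos gp] by blast
  show "limit_of_zeros a b c d (complex_of_real u)"
  proof (rule zeros_seq)
    fix e :: real assume e: "e > 0"
    have "eventually (\<lambda>n. \<exists>x. \<bar>x - u\<bar> \<le> min e (\<delta>0/2) \<and> W a b c d n x = 0) sequentially"
      using e d0 by (intro H0) auto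
    then show "eventually (\<lambda>n. \<exists>x. \<bar>x - u\<bar> \<le> e \<and> W a b c d n x = 0) sequentially"
      by (rule eventually_mono) auto
  qed
qed

lemma W_root:
  fixes u :: real
  assumes gu: "(1-a)*u^2 - (b+c)*u - d = 0"
  shows "W a b c d n u = u^n"
proof -
  have u2: "u^2 = (a*u+b)*u + (c*u+d)" using gu by (simp add: power2_eq_square algebra_simps)
  have "W a b c d n u = u^n \<and> W a b c d (Suc n) u = u^(Suc n)"
  proof (induction n)
    case 0 then show ?case by simp
  next
    case (Suc n)
    then have "W a b c d (Suc (Suc n)) u = (a*u+b)*u^(Suc n) + (c*u+d)*u^n" by (simp only: W_real_SS)
    also have "\<dots> = u^n * ((a*u+b)*u + (c*u+d))" by (simp add: algebra_simps)
    also have "\<dots> = u^(Suc (Suc n))" by (simp only: u2[symmetric]) (simp add: power2_eq_square)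
    finally show ?case using Suc by simp
  qed
  then show ?thesis by blast
qed

lemma root_case:
  fixes a b c d t u :: real
  assumes a: "a > 0" and c: "c > 0" and t: "t > 0" and bt: "b = -a*t" and dt: "d = -c*t"
    and gu: "(1-a)*u^2 - (b+c)*u - d = 0" and u0: "u < 0" and uv: "u \<le> t - 4*c/a^2"
    and ne: "u \<noteq> t - 4*c/a^2 \<Longrightarrow> 2*u - (a*u+b) > 0 \<and> 2*(1-a)*u - (b+c) \<noteq> 0"
  shows "(\<forall>n. (-1)^n * W a b c d n u > 0) \<and> (u \<noteq> t - 4*c/a^2 \<longrightarrow>
      limit_of_zeros a b c d (complex_of_real u) \<and> isolated_pt a b c d (complex_of_real u))"
proof (intro conjI allI impI)
  fix n
  have "(-1)^n * W a b c d n u = (-u)^n" by (simp add: W_root[OF gu] power_mult_distrib[symmetric])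
  then show "(-1)^n * W a b c d n u > 0" using u0 by simp
next
  assume uv': "u \<noteq> t - 4*c/a^2"
  have ult: "u < t - 4*c/a^2" using uv uv' by simp
  have A: "a*u+b < 0" using a t u0 bt by (simp add: mult_neg_pos add_neg_neg)
  have Du: "(a*u+b)^2 + 4*(c*u+d) > 0"
  proof -
    have e: "(a*u+b)^2 + 4*(c*u+d) = (u - t) * (a^2*(u-t) + 4*c)"
      using bt dt by (simp add: power2_eq_square algebra_simps)
    have "a^2*(u - t) < - 4*c" using ult a by (simp add: field_simps)
    then have "a^2*(u-t) + 4*c < 0" by simp
    moreover have "u - t < 0" using u0 t by simp
    ultimately show ?thesis unfolding e by (simp add: mult_neg_neg)
  qed
  show "limit_of_zeros a b c d (complex_of_real u)" and "isolated_pt a b c d (complex_of_real u)"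
    using lim_part[OF A gu Du] ne[OF uv'] by blast+
qed



lemma qroot:
  fixes p B d s u w :: real
  assumes p: "p \<noteq> 0" and s2: "s^2 = B^2 + 4*d*p" and u: "u = (B+s)/(2*p)" and w: "w = (B-s)/(2*p)"
  shows "p*u^2 - B*u - d = 0" "2*p*u - B = s" "p*z^2 - B*z - d = p*(z-u)*(z-w)"
proof -
  have pu: "2*p*u = B + s" using p u by simp
  have pw: "2*p*w = B - s" using p w by simp
  have "4*p*(p*u^2 - B*u - d) = (2*p*u)^2 - 2*B*(2*p*u) - 4*p*d" by (simp add: power2_eq_square algebra_simps)
  also have "\<dots> = 0" unfolding pu using s2 by (simp add: power2_eq_square algebra_simps)
  finally show "p*u^2 - B*u - d = 0" using p by simp
  show "2*p*u - B = s" using pu by simp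
  have "4*p*(p*(z-u)*(z-w)) = 4*p*p*z^2 - 2*p*z*(2*p*u + 2*p*w) + (2*p*u)*(2*p*w)"
    by (simp add: power2_eq_square algebra_simps)
  also have "\<dots> = 4*p*(p*z^2 - B*z - d)" unfolding pu pw using s2
    by (simp add: power2_eq_square algebra_simps)
  finally show "p*z^2 - B*z - d = p*(z-u)*(z-w)" using p by simp
qed

lemma gv_id:
  fixes a c t :: real
  assumes a: "a > 0"
  shows "(1-a)*(t - 4*c/a^2)^2 - (-a*t+c)*(t - 4*c/a^2) - (-c*t) = (t - 4*c/a^2 + 2*c/a)^2"
  using a by (simp add: power2_eq_square field_simps)

lemma gm_id:
  fixes a c t :: real
  assumes a: "a > 0"
  shows "a^2 * ((1-a)*(-2*c/a)^2 - (-a*t+c)*(-2*c/a) - (-c*t)) = -c*(2*c*(a-2) + a^2*t)"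
  using a by (simp add: power2_eq_square field_simps)

lemma vpos_id:
  fixes a c t :: real
  assumes a: "a > 0"
  shows "a^2 * (t - 4*c/a^2 + 2*c/a) = 2*c*(a-2) + a^2*t"
  using a by (simp add: power2_eq_square field_simps)



lemma caseC2:
  fixes a b c d t u :: real
  assumes a: "a > 0" and c: "c > 0" and t: "t > 0" and a1: "a < 1" and F: "2*c*(a-2) + a^2*t > 0"
    and bt: "b = -a*t" and dt: "d = -c*t"
    and u: "u = ((b+c) + sqrt((b+c)^2 + 4*d*(1-a)))/(2*(1-a))"
  shows "(1-a)*u^2 - (b+c)*u - d = 0" "u < 0" "u < t - 4*c/a^2" "2*u - (a*u+b) > 0" "2*(1-a)*u - (b+c) \<noteq> 0"
proof -
  define Dg where "Dg = (b+c)^2 + 4*d*(1-a)"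
  define s where "s = sqrt Dg"
  define w where "w = ((b+c) - s)/(2*(1-a))"
  define g where "g z = (1-a)*z^2 - (b+c)*z - d" for z
  define v where "v = t - 4*c/a^2"
  define m where "m = -2*c/a"
  have DgF: "Dg = c^2 + (2*c*(a-2) + a^2*t)*t" using bt dt by (simp add: Dg_def power2_eq_square algebra_simps)
  have Dg0: "Dg > 0" unfolding DgF using c t F by (simp add: add_pos_pos)
  have s0: "s > 0" using Dg0 by (simp add: s_def)
  have s2: "s^2 = (b+c)^2 + 4*d*(1-a)" using Dg0 by (simp add: s_def Dg_def)
  have p: "1 - a \<noteq> 0" using a1 by simp
  have uu: "u = ((b+c) + s)/(2*(1-a))" by (simp add: u s_def Dg_def)
  note Q = qroot[OF p s2 uu w_def]
  show gu: "(1-a)*u^2 - (b+c)*u - d = 0" by (rule Q(1))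
  show "2*(1-a)*u - (b+c) \<noteq> 0" using Q(2) s0 by simp
  have fz: "g z = (1-a)*(z-u)*(z-w)" for z unfolding g_def by (rule Q(3))
  have at2c: "a*t > c"
  proof -
    have "a^2*t > 2*c*(2-a)" using F by (simp add: algebra_simps)
    moreover have "2*c*(2-a) > 2*c" using c a1 by simp
    moreover have "a*t > a^2*t" using a a1 t by (simp add: power2_eq_square)
    ultimately show ?thesis using c by linarith
  qed
  have "s < a*t - c"
  proof (rule power_less_imp_less_base[of _ 2])
    have "s^2 = (a*t - c)^2 - 4*c*t*(1-a)" unfolding s2 using bt dt by (simp add: power2_eq_square algebra_simps)
    moreover have "4*c*t*(1-a) > 0" using c t a1 by simp
    ultimately show "s^2 < (a*t - c)^2" by linarith
    show "0 \<le> a*t - c" using at2c by simp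
  qed
  then have "(b+c) + s < 0" using bt by simp
  then show u0: "u < 0" unfolding uu using a1 by (simp add: divide_neg_pos)
  have wu: "w \<le> u" unfolding uu w_def using s0 a1 by (intro divide_right_mono) auto
  have gm: "g m < 0"
  proof -
    have "a^2 * g m = -c*(2*c*(a-2) + a^2*t)" unfolding g_def m_def using gm_id[OF a, of c t] bt dt by simp
    moreover have "-c*(2*c*(a-2) + a^2*t) < 0" using c F by simp
    ultimately show ?thesis using a by (metis mult_less_0_iff zero_less_power not_less_iff_gr_or_eq)
  qed
  have "(m-u)*(m-w) < 0"
  proof -
    have "(1-a)*((m-u)*(m-w)) < 0" using gm fz[of m] by (simp add: mult.assoc)
    then show ?thesis using a1 by (simp add: mult_less_0_iff)
  qed
  then have mu: "m < u" and mw: "w < m" using wu by (auto simp: mult_less_0_iff)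
  have vm: "v > m"
  proof -
    have "a^2 * (v - m) = 2*c*(a-2) + a^2*t" unfolding v_def m_def using vpos_id[OF a, of t c] by simp
    then have "a^2 * (v - m) > 0" using F by simp
    then show ?thesis using a by (simp add: zero_less_mult_iff)
  qed
  have "g v = (v - m)^2" unfolding g_def v_def m_def using gv_id[OF a, of t c] bt dt by simp
  then have "g v > 0" using vm by simp
  then have "(1-a)*((v-u)*(v-w)) > 0" using fz[of v] by (simp add: mult.assoc)
  then have "(v-u)*(v-w) > 0" using a1 by (simp add: zero_less_mult_iff)
  moreover have "v - w > 0" using vm mw by simp
  ultimately show "u < t - 4*c/a^2" unfolding v_def[symmetric] by (simp add: zero_less_mult_iff)
  have au: "a*u > -2*c" using mu a by (simp add: m_def field_simps)
  have "a*(2*u - (a*u+b)) = (2-a)*(a*u) + a^2*t" using bt by (simp add: power2_eq_square algebra_simps)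
  also have "\<dots> > (2-a)*(-2*c) + a^2*t"
  proof -
    have "(2-a)*(-2*c) < (2-a)*(a*u)" using au a1 by (intro mult_strict_left_mono) auto
    then show ?thesis by simp
  qed
  finally have "a*(2*u - (a*u+b)) > 0" using F by (simp add: algebra_simps)
  then show "2*u - (a*u+b) > 0" using a by (simp add: zero_less_mult_iff)
qed



lemma caseC3b:
  fixes a b c d t u :: real
  assumes a1: "a > 1" and c: "c > 0" and t: "t > 0"
    and H: "a \<ge> 2 \<or> 2*c*(a-2) + a^2*t > 0"
    and bt: "b = -a*t" and dt: "d = -c*t"
    and u: "u = ((b+c) + sqrt((b+c)^2 + 4*d*(1-a)))/(2*(1-a))"
  shows "(1-a)*u^2 - (b+c)*u - d = 0" "u < 0" "u \<le> t - 4*c/a^2" "2*u - (a*u+b) > 0" "2*(1-a)*u - (b+c) \<noteq> 0"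
proof -
  have a: "a > 0" using a1 by simp
  define Dg where "Dg = (b+c)^2 + 4*d*(1-a)"
  define s where "s = sqrt Dg"
  define w where "w = ((b+c) - s)/(2*(1-a))"
  define g where "g z = (1-a)*z^2 - (b+c)*z - d" for z
  define v where "v = t - 4*c/a^2"
  define m where "m = -2*c/a"
  have dp: "4*d*(1-a) > 0"
  proof -
    have "c*t > 0" using c t by simp
    then have "(c*t)*(a-1) > 0" using a1 by simp
    then show ?thesis using dt by (simp add: algebra_simps)
  qed
  have Dg0: "Dg > (b+c)^2" using dp by (simp add: Dg_def)
  then have Dgp: "Dg > 0" by (smt (verit) zero_le_power2)
  have s0: "s > 0" using Dgp by (simp add: s_def)
  have s2: "s^2 = (b+c)^2 + 4*d*(1-a)" using Dgp by (simp add: s_def Dg_def)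
  have sB: "\<bar>b+c\<bar> < s"
  proof (rule power_less_imp_less_base[of _ 2])
    show "\<bar>b+c\<bar>^2 < s^2" using Dg0 s2 by (simp add: Dg_def)
    show "0 \<le> s" using s0 by simp
  qed
  have p: "1 - a \<noteq> 0" using a1 by simp
  have uu: "u = ((b+c) + s)/(2*(1-a))" by (simp add: u s_def Dg_def)
  note Q = qroot[OF p s2 uu w_def]
  show gu: "(1-a)*u^2 - (b+c)*u - d = 0" by (rule Q(1))
  show "2*(1-a)*u - (b+c) \<noteq> 0" using Q(2) s0 by simp
  have fz: "g z = (1-a)*(z-u)*(z-w)" for z unfolding g_def by (rule Q(3))
  have "(b+c) + s > 0" using sB by linarith
  then show u0: "u < 0" unfolding uu using a1 by (simp add: divide_pos_neg)
  have "(b+c) - s < 0" using sB by linarith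
  then have w0: "w > 0" unfolding w_def using a1 by (simp add: divide_neg_neg)
  have m0: "m < 0" using a c by (simp add: m_def)
  have "g v = (v - m)^2" unfolding g_def v_def m_def using gv_id[OF a, of t c] bt dt by simp
  then have "(1-a)*((v-u)*(v-w)) \<ge> 0" using fz[of v] by (simp add: mult.assoc)
  then have vv: "(v-u)*(v-w) \<le> 0" using a1 by (simp add: zero_le_mult_iff)
  show "u \<le> t - 4*c/a^2"
  proof (rule ccontr)
    assume "\<not> u \<le> t - 4*c/a^2"
    then have "v < u" by (simp add: v_def)
    then have "(v-u)*(v-w) > 0" using u0 w0 by (intro mult_neg_neg) auto
    then show False using vv by simp
  qed
  have au: "a*u < 0" using a u0 by (simp add: mult_pos_neg)
  have key: "a*(2*u - (a*u+b)) = (2-a)*(a*u) + a^2*t" using bt by (simp add: power2_eq_square algebra_simps)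
  have "a*(2*u - (a*u+b)) > 0"
  proof (cases "a \<ge> 2")
    case True
    have "(2-a)*(a*u) \<ge> 0" using True au by (intro mult_nonpos_nonpos) auto
    moreover have "a^2*t > 0" using a t by simp
    ultimately show ?thesis unfolding key by linarith
  next
    case False
    then have F: "2*c*(a-2) + a^2*t > 0" using H by simp
    have gm: "g m < 0"
    proof -
      have "a^2 * g m = -c*(2*c*(a-2) + a^2*t)" unfolding g_def m_def using gm_id[OF a, of c t] bt dt by simp
      moreover have "-c*(2*c*(a-2) + a^2*t) < 0" using c F by simp
      ultimately show ?thesis using a by (metis mult_less_0_iff zero_less_power not_less_iff_gr_or_eq)
    qed
    have "(1-a)*((m-u)*(m-w)) < 0" using gm fz[of m] by (simp add: mult.assoc)
    then have "(m-u)*(m-w) > 0" using a1 by (simp add: mult_less_0_iff)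
    moreover have "m - w < 0" using m0 w0 by simp
    ultimately have "m < u" by (simp add: zero_less_mult_iff)
    then have au2: "a*u > -2*c" using a by (simp add: m_def field_simps)
    have "(2-a)*(-2*c) < (2-a)*(a*u)" using au2 False by (intro mult_strict_left_mono) auto
    then show ?thesis unfolding key using F by (simp add: algebra_simps)
  qed
  then show "2*u - (a*u+b) > 0" using a by (simp add: zero_less_mult_iff)
qed

lemma caseC3a:
  fixes b c d t u :: real
  assumes c: "c > 0" and t: "t > 0" and t2c: "t > 2*c"
    and bt: "b = -1*t" and dt: "d = -c*t"
    and u: "u = - d / (b + c)"
  shows "(1-1)*u^2 - (b+c)*u - d = 0" "u < 0" "u \<le> t - 4*c/1^2" "2*u - (1*u+b) > 0" "2*(1-1)*u - (b+c) \<noteq> 0"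
proof -
  have ct: "c - t < 0" using t2c c by simp
  have bc: "b + c = c - t" using bt by simp
  have uu: "(c - t) * u = c*t" using u ct dt bc by (simp add: field_simps)
  show "(1-1)*u^2 - (b+c)*u - d = 0" using uu bc dt by simp
  have "c*t > 0" using c t by simp
  then show u0: "u < 0" using uu ct by (metis mult_neg_neg not_less_iff_gr_or_eq zero_less_mult_iff mult_neg_pos)
  have "(t - c)*((t - 4*c) - u) = (t - 4*c + 2*c)^2"
    using uu by (simp add: power2_eq_square algebra_simps)
  then have "(t - c)*((t - 4*c) - u) \<ge> 0" by simp
  then show "u \<le> t - 4*c/1^2" using ct by (simp add: zero_le_mult_iff)
  have "(c - t)*(u + t) = t*(2*c - t)" using uu by (simp add: algebra_simps)
  also have "\<dots> < 0" using t t2c by (simp add: mult_pos_neg)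
  finally have "u + t > 0" using ct by (simp add: mult_less_0_iff)
  then show "2*u - (1*u+b) > 0" using bt by simp
  show "2*(1-1)*u - (b+c) \<noteq> 0" using bc ct by simp
qed



lemma caseC1:
  fixes a b c d t :: real
  assumes a: "a > 0" and c: "c > 0" and t: "t > 0" and a2: "a < 2"
    and F: "2*c*(a-2) + a^2*t \<le> 0"
    and bt: "b = -a*t" and dt: "d = -c*t"
  shows "t - 4*c/a^2 < 0" "\<forall>n. (-1)^n * W a b c d n (t - 4*c/a^2) > 0"
proof -
  define v where "v = t - 4*c/a^2"
  define mu where "mu = 2*c/a"
  define k where "k = v + mu"
  have mu0: "mu > 0" using a c by (simp add: mu_def)
  have "a^2 * k = 2*c*(a-2) + a^2*t" unfolding k_def v_def mu_def using vpos_id[OF a, of t c] by simp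
  then have "a^2 * k \<le> 0" using F by simp
  then have k0: "k \<le> 0" using a by (simp add: mult_le_0_iff)
  have "v < 0" using k0 mu0 by (simp add: k_def)
  then show "t - 4*c/a^2 < 0" by (simp add: v_def)
  have Av: "a* v + b = -2*mu" using a bt by (simp add: v_def mu_def power2_eq_square field_simps)
  have Bv: "c* v + d = - (mu^2)" using a dt by (simp add: v_def mu_def power2_eq_square field_simps)
  have S: "(-1)^n * W a b c d n v * mu = mu^n * (mu - n*k) \<and>
           (-1)^(Suc n) * W a b c d (Suc n) v * mu = mu^(Suc n) * (mu - (Suc n)*k)" for n
  proof (induction n)
    case 0 then show ?case by (simp add: k_def algebra_simps)
  next
    case (Suc n)
    define X where "X = (-1)^n * W a b c d n v * mu"
    define Y where "Y = (-1)^(Suc n) * W a b c d (Suc n) v * mu"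
    have hX: "X = mu^n * (mu - n*k)" using Suc by (simp add: X_def)
    have hY: "Y = mu^(Suc n) * (mu - (Suc n)*k)" using Suc by (simp add: Y_def)
    have "(-1)^(Suc (Suc n)) * W a b c d (Suc (Suc n)) v * mu = -(a* v+b)*Y + (c* v+d)*X"
      by (simp add: W_real_SS X_def Y_def algebra_simps)
    also have "\<dots> = 2*mu*(mu^(Suc n) * (mu - (Suc n)*k)) - (mu^2)*(mu^n * (mu - n*k))"
      unfolding Av Bv hX hY by simp
    also have "\<dots> = mu^(Suc (Suc n)) * (mu - (Suc (Suc n))*k)"
      by (simp add: power2_eq_square algebra_simps)
    finally show ?case using Suc by simp
  qed
  show "\<forall>n. (-1)^n * W a b c d n (t - 4*c/a^2) > 0"
  proof
    fix n
    have "real n * k \<le> 0" using k0 by (simp add: mult_nonneg_nonpos)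
    then have "mu - n*k > 0" using mu0 by linarith
    then have "(-1)^n * W a b c d n v * mu > 0" using S[of n] mu0 by simp
    then show "(-1)^n * W a b c d n (t - 4*c/a^2) > 0" using mu0 by (simp add: v_def zero_less_mult_iff)
  qed
qed



theorem lemma3p5:
  fixes a b c d :: real
  assumes "a > 0" and "c > 0" and "b < 0" and "d < 0"
    and "xA a b = xB c d"
  shows "upt_u a b c d \<le> xDelta_minus a b c d
    \<and> upt_u a b c d < 0
    \<and> (\<forall>n. (-1) ^ n * W a b c d n (upt_u a b c d) > (0::real))
    \<and> (upt_u a b c d \<noteq> xDelta_minus a b c d \<longrightarrow>
         limit_of_zeros a b c d (complex_of_real (upt_u a b c d))
         \<and> isolated_pt a b c d (complex_of_real (upt_u a b c d)))"
proof -
  note a = assms(1) and c = assms(2)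
  define t where "t = -b/a"
  have t: "t > 0" using assms by (simp add: t_def divide_neg_pos)
  have bt: "b = -a*t" using a by (simp add: t_def)
  have dt: "d = -c*t" using assms(5) a c by (simp add: t_def xA_def xB_def field_simps)
  have DD: "DeltaDelta a b c d = c^2" using dt by (simp add: DeltaDelta_def xA_def t_def)
  have hv: "xDelta_minus a b c d = t - 4*c/a^2"
    using c by (simp add: xDelta_minus_def DD xA_def t_def field_simps)
  have hF: "FF a b c d = t * (2*c*(a-2) + a^2*t)"
    using bt dt by (simp add: FF_def power2_eq_square algebra_simps)
  have Fle: "FF a b c d \<le> 0 \<longleftrightarrow> 2*c*(a-2) + a^2*t \<le> 0" unfolding hF using t
    by (simp add: mult_le_0_iff)
  have Fgt: "FF a b c d > 0 \<longleftrightarrow> 2*c*(a-2) + a^2*t > 0" unfolding hF using t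
    by (simp add: zero_less_mult_iff)
  define u where "u = upt_u a b c d"
  define s where "s = sqrt ((b+c)^2 + 4*d*(1-a))"
  have main: "u \<le> t - 4*c/a^2 \<and> u < 0 \<and> (\<forall>n. (-1)^n * W a b c d n u > (0::real)) \<and>
    (u \<noteq> t - 4*c/a^2 \<longrightarrow> limit_of_zeros a b c d (complex_of_real u) \<and> isolated_pt a b c d (complex_of_real u))"
  proof (cases "a < 2 \<and> FF a b c d \<le> 0")
    case True
    then have uv: "u = t - 4*c/a^2" by (simp add: u_def upt_u_def hv)
    have F: "2*c*(a-2) + a^2*t \<le> 0" using True Fle by simp
    show ?thesis using caseC1[OF a c t _ F bt dt] True uv by simp
  next
    case nC1: False
    show ?thesis
    proof (cases "a < 1 \<and> FF a b c d > 0")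
      case True
      then have F: "2*c*(a-2) + a^2*t > 0" and a1: "a < 1" using Fgt by auto
      have uu: "u = ((b+c) + sqrt((b+c)^2 + 4*d*(1-a)))/(2*(1-a))"
        using nC1 True a1 by (simp add: u_def upt_u_def xg_plus_def Delta_g_def add_divide_distrib)
      note C = caseC2[OF a c t a1 F bt dt uu]
      show ?thesis using root_case[OF a c t bt dt C(1) C(2)] C by auto
    next
      case nC2: False
      have um: "u = xg_minus a b c d" using nC1 nC2 unfolding u_def upt_u_def by auto
      have a1: "a \<ge> 1"
      proof (rule ccontr)
        assume "\<not> a \<ge> 1"
        then have "a < 1" by simp
        then show False using nC1 nC2 by auto
      qed
      show ?thesis
      proof (cases "a = 1")
        case True
        have "FF a b c d > 0" using nC1 True by auto
        then have "2*c*(a-2) + a^2*t > 0" using Fgt by simp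
        then have t2c: "t > 2*c" using True by simp
        have bt1: "b = -1*t" and dt1: "d = -c*t" using bt dt True by auto
        have uu: "u = -d/(b+c)" using um True by (simp add: xg_minus_def)
        note C = caseC3a[OF c t t2c bt1 dt1 uu]
        have C': "(1-a)*u^2 - (b+c)*u - d = 0" "u < 0" "u \<le> t - 4*c/a^2" "2*u - (a*u+b) > 0"
          "2*(1-a)*u - (b+c) \<noteq> 0" using C True by auto
        show ?thesis using root_case[OF a c t bt dt C'(1) C'(2) C'(3)] C' by auto
      next
        case False
        then have a1': "a > 1" using a1 by simp
        have H: "a \<ge> 2 \<or> 2*c*(a-2) + a^2*t > 0" using nC1 Fgt by auto
        have uu: "u = ((b+c) + sqrt((b+c)^2 + 4*d*(1-a)))/(2*(1-a))"
        proof -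
          define S where "S = sqrt((b+c)^2 + 4*d*(1-a))"
          have ab: "\<bar>1 - a\<bar> = a - 1" using a1' by simp
          have e1: "u = (b+c)/(2*(1-a)) - S/(2*(a-1))" using um a1' by (simp add: xg_minus_def Delta_g_def S_def ab)
          have e2: "2*(a-1) = -(2*(1-a))" by simp
          have "u = (b+c)/(2*(1-a)) + S/(2*(1-a))" unfolding e1 e2 divide_minus_right by simp
          then show ?thesis by (simp add: add_divide_distrib S_def)
        qed
        note C = caseC3b[OF a1' c t H bt dt uu]
        show ?thesis using root_case[OF a c t bt dt C(1) C(2) C(3)] C by auto
      qed
    qed
  qed
  then show ?thesis unfolding u_def hv by blast
qed


end
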